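(* Let $A$ and $B$ be groups, and let $a\in A$, $b\in B$ be non-trivial elements such that at least one of $a,b$ does not have order $2$. Then for every $x\in A*B$ with $x\notin\langle ab\rangle$, we have $\langle ab\rangle\cap x\langle ab\rangle x^{-1}=\{e\}$. In particular $\langle ab\rangle$ is conjugate separated in $A*B$.
   Context: A subgroup $H$ of a group $G$ is conjugate separated if for every $x\in G\setminus H$ the intersection $H\cap xHx^{-1}$ is finite. *)

theory Defs
  imports "HOL-Algebra.Algebra"
begin

text \<open>Free product A * B of two groups, realised concretely by reduced words:
  lists of letters Inl a (a in A, a nontrivial) and Inr b (b in B, b nontrivial),
  with no two adjacent letters from the same factor.\<close>

definition letter_ok :: "('a,'c) monoid_scheme \<Rightarrow> ('b,'d) monoid_scheme \<Rightarrow> 'a + 'b \<Rightarrow> bool" where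
  "letter_ok A B l = (case l of Inl a \<Rightarrow> a \<in> carrier A \<and> a \<noteq> \<one>\<^bsub>A\<^esub>
                               | Inr b \<Rightarrow> b \<in> carrier B \<and> b \<noteq> \<one>\<^bsub>B\<^esub>)"

fun same_side :: "'a + 'b \<Rightarrow> 'a + 'b \<Rightarrow> bool" where
  "same_side (Inl _) (Inl _) = True"
| "same_side (Inr _) (Inr _) = True"
| "same_side _ _ = False"

definition reduced_word :: "('a,'c) monoid_scheme \<Rightarrow> ('b,'d) monoid_scheme \<Rightarrow> ('a + 'b) list \<Rightarrow> bool" where
  "reduced_word A B w = ((\<forall>l\<in>set w. letter_ok A B l) \<and>
      (\<forall>i. Suc i < length w \<longrightarrow> \<not> same_side (w ! i) (w ! Suc i)))"

fun cons_letter :: "('a,'c) monoid_scheme \<Rightarrow> ('b,'d) monoid_scheme \<Rightarrow> 'a + 'b \<Rightarrow> ('a + 'b) list \<Rightarrow> ('a + 'b) list" where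
  "cons_letter A B l [] = [l]"
| "cons_letter A B (Inl a) (Inl a' # w) =
     (let c = a \<otimes>\<^bsub>A\<^esub> a' in if c = \<one>\<^bsub>A\<^esub> then w else Inl c # w)"
| "cons_letter A B (Inr b) (Inr b' # w) =
     (let c = b \<otimes>\<^bsub>B\<^esub> b' in if c = \<one>\<^bsub>B\<^esub> then w else Inr c # w)"
| "cons_letter A B l w = l # w"

definition free_product :: "('a,'c) monoid_scheme \<Rightarrow> ('b,'d) monoid_scheme \<Rightarrow> ('a + 'b) list monoid" where
  "free_product A B = \<lparr> carrier = {w. reduced_word A B w},
                        monoid.mult = (\<lambda>w v. foldr (cons_letter A B) w v),
                        monoid.one = [] \<rparr>"

definition incl_left :: "('a,'c) monoid_scheme \<Rightarrow> 'a \<Rightarrow> ('a + 'b) list" where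
  "incl_left A a = (if a = \<one>\<^bsub>A\<^esub> then [] else [Inl a])"

definition incl_right :: "('b,'d) monoid_scheme \<Rightarrow> 'b \<Rightarrow> ('a + 'b) list" where
  "incl_right B b = (if b = \<one>\<^bsub>B\<^esub> then [] else [Inr b])"

definition conjugate_separated :: "('g,'e) monoid_scheme \<Rightarrow> 'g set \<Rightarrow> bool" where
  "conjugate_separated G H = (\<forall>x \<in> carrier G - H.
      finite (H \<inter> (\<lambda>h. x \<otimes>\<^bsub>G\<^esub> h \<otimes>\<^bsub>G\<^esub> inv\<^bsub>G\<^esub> x) ` H))"

end

theory Submission
  imports Defs
begin


lemma same_side_iff: "same_side l l' = (isl l = isl l')"
  by (cases l; cases l') auto

lemma all_nat_split: "(\<forall>i::nat. P i) = (P 0 \<and> (\<forall>i. P (Suc i)))"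
  by (metis not0_implies_Suc)

lemma reduced_Nil[simp]: "reduced_word A B []"
  by (simp add: reduced_word_def)

lemma reduced_Cons[simp]: "reduced_word A B (l # w) \<longleftrightarrow>
   letter_ok A B l \<and> reduced_word A B w \<and> (w = [] \<or> isl l \<noteq> isl (hd w))"
  unfolding reduced_word_def
  apply (subst all_nat_split)
  apply (cases w)
   apply (auto simp: same_side_iff)
  done

lemma reduced_append: "reduced_word A B (xs @ ys) \<longleftrightarrow>
   reduced_word A B xs \<and> reduced_word A B ys \<and> (xs = [] \<or> ys = [] \<or> isl (last xs) \<noteq> isl (hd ys))"
  by (induction xs) (auto simp: hd_append)

lemma cl_app: "w = [] \<or> isl l \<noteq> isl (hd w) \<Longrightarrow> cons_letter A B l w = l # w"
  by (cases w; cases l; cases "hd w") auto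

fun linv :: "('a,'c) monoid_scheme \<Rightarrow> ('b,'d) monoid_scheme \<Rightarrow> 'a + 'b \<Rightarrow> 'a + 'b" where
  "linv A B (Inl x) = Inl (inv\<^bsub>A\<^esub> x)"
| "linv A B (Inr y) = Inr (inv\<^bsub>B\<^esub> y)"

definition winv where "winv A B w = rev (map (linv A B) w)"

lemma isl_linv[simp]: "isl (linv A B l) = isl l"
  by (cases l) auto

locale fp = A: group A + B: group B
  for A :: "('a,'c) monoid_scheme" and B :: "('b,'d) monoid_scheme"
begin

abbreviation "cl \<equiv> cons_letter A B"
abbreviation "rd \<equiv> reduced_word A B"
abbreviation "mul u v \<equiv> foldr cl u v"

lemma letter_okl[simp]: "letter_ok A B (Inl x) = (x \<in> carrier A \<and> x \<noteq> \<one>\<^bsub>A\<^esub>)"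
  by (simp add: letter_ok_def)
lemma letter_okr[simp]: "letter_ok A B (Inr x) = (x \<in> carrier B \<and> x \<noteq> \<one>\<^bsub>B\<^esub>)"
  by (simp add: letter_ok_def)

lemma rd_cl: "letter_ok A B l \<Longrightarrow> rd w \<Longrightarrow> rd (cl l w)"
proof (cases w)
  case (Cons l' w')
  assume *: "letter_ok A B l" "rd w"
  then show ?thesis using Cons
    by (cases l; cases l') (auto simp: Let_def)
qed simp

lemma rd_mul: "rd u \<Longrightarrow> rd v \<Longrightarrow> rd (mul u v)"
  by (induction u) (auto intro: rd_cl)

lemma act_l: assumes x: "x \<in> carrier A" "x \<noteq> \<one>\<^bsub>A\<^esub>" and y: "y \<in> carrier A" "y \<noteq> \<one>\<^bsub>A\<^esub>" and w: "rd w"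
  shows "cl (Inl x) (cl (Inl y) w) = (if x \<otimes>\<^bsub>A\<^esub> y = \<one>\<^bsub>A\<^esub> then w else cl (Inl (x \<otimes>\<^bsub>A\<^esub> y)) w)"
proof (cases w)
  case Nil then show ?thesis by (simp add: Let_def)
next
  case (Cons l w')
  show ?thesis
  proof (cases l)
    case (Inl c)
    have c: "c \<in> carrier A" "c \<noteq> \<one>\<^bsub>A\<^esub>" using w Cons Inl by auto
    have w': "w' = [] \<or> \<not> isl (hd w')" using w Cons Inl by auto
    show ?thesis
    proof (cases "y \<otimes>\<^bsub>A\<^esub> c = \<one>\<^bsub>A\<^esub>")
      case True
      have yc: "c = inv\<^bsub>A\<^esub> y" using True c y
        by (metis A.inv_equality A.inv_inv)
      have xy: "x \<otimes>\<^bsub>A\<^esub> y \<otimes>\<^bsub>A\<^esub> c = x" using yc x y by (simp add: A.m_assoc)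
      have "cl (Inl x) w' = Inl x # w'" using w' by (intro cl_app) auto
      moreover have "x \<otimes>\<^bsub>A\<^esub> y = \<one>\<^bsub>A\<^esub> \<Longrightarrow> x = c"
        using yc x y by (metis A.inv_equality)
      ultimately show ?thesis using Cons Inl True xy x by (auto simp: Let_def)
    next
      case False
      have "x \<otimes>\<^bsub>A\<^esub> y = \<one>\<^bsub>A\<^esub> \<Longrightarrow> x \<otimes>\<^bsub>A\<^esub> (y \<otimes>\<^bsub>A\<^esub> c) = c"
        using x y c by (metis A.l_one A.m_assoc)
      then show ?thesis using Cons Inl False x y c by (auto simp: Let_def A.m_assoc)
    qed
  next
    case (Inr c)
    then show ?thesis using Cons by (auto simp: Let_def)
  qed
qed

lemma act_r: assumes x: "x \<in> carrier B" "x \<noteq> \<one>\<^bsub>B\<^esub>" and y: "y \<in> carrier B" "y \<noteq> \<one>\<^bsub>B\<^esub>" and w: "rd w"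
  shows "cl (Inr x) (cl (Inr y) w) = (if x \<otimes>\<^bsub>B\<^esub> y = \<one>\<^bsub>B\<^esub> then w else cl (Inr (x \<otimes>\<^bsub>B\<^esub> y)) w)"
proof (cases w)
  case Nil then show ?thesis by (simp add: Let_def)
next
  case (Cons l w')
  show ?thesis
  proof (cases l)
    case (Inr c)
    have c: "c \<in> carrier B" "c \<noteq> \<one>\<^bsub>B\<^esub>" using w Cons Inr by auto
    have w': "w' = [] \<or> isl (hd w')" using w Cons Inr by auto
    show ?thesis
    proof (cases "y \<otimes>\<^bsub>B\<^esub> c = \<one>\<^bsub>B\<^esub>")
      case True
      have yc: "c = inv\<^bsub>B\<^esub> y" using True c y
        by (metis B.inv_equality B.inv_inv)
      have xy: "x \<otimes>\<^bsub>B\<^esub> y \<otimes>\<^bsub>B\<^esub> c = x" using yc x y by (simp add: B.m_assoc)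
      have "cl (Inr x) w' = Inr x # w'" using w' by (intro cl_app) auto
      moreover have "x \<otimes>\<^bsub>B\<^esub> y = \<one>\<^bsub>B\<^esub> \<Longrightarrow> x = c"
        using yc x y by (metis B.inv_equality)
      ultimately show ?thesis using Cons Inr True xy x by (auto simp: Let_def)
    next
      case False
      have "x \<otimes>\<^bsub>B\<^esub> y = \<one>\<^bsub>B\<^esub> \<Longrightarrow> x \<otimes>\<^bsub>B\<^esub> (y \<otimes>\<^bsub>B\<^esub> c) = c"
        using x y c by (metis B.l_one B.m_assoc)
      then show ?thesis using Cons Inr False x y c by (auto simp: Let_def B.m_assoc)
    qed
  next
    case (Inl c)
    then show ?thesis using Cons by (auto simp: Let_def)
  qed
qed

lemma mul_cl: assumes "letter_ok A B l" "rd u" "rd v"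
  shows "mul (cl l u) v = cl l (mul u v)"
proof (cases u)
  case Nil then show ?thesis by simp
next
  case (Cons l' u')
  have r: "rd (mul u' v)" using assms Cons by (auto intro: rd_mul)
  show ?thesis
  proof (cases "isl l = isl l'")
    case False
    then show ?thesis using Cons by (simp add: cl_app)
  next
    case True
    show ?thesis
    proof (cases l)
      case (Inl x)
      then obtain y where y: "l' = Inl y" using True by (cases l') auto
      show ?thesis using act_l[of x y "mul u' v"] assms Cons Inl y r by (auto simp: Let_def)
    next
      case (Inr x)
      then obtain y where y: "l' = Inr y" using True by (cases l') auto
      show ?thesis using act_r[of x y "mul u' v"] assms Cons Inr y r by (auto simp: Let_def)
    qed
  qed
qed

lemma mul_assoc: "rd u \<Longrightarrow> rd w \<Longrightarrow> rd v \<Longrightarrow> mul (mul u w) v = mul u (mul w v)"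
proof (induction u)
  case (Cons l u)
  then show ?case by (simp add: mul_cl rd_mul)
qed simp

lemma letter_ok_linv: "letter_ok A B l \<Longrightarrow> letter_ok A B (linv A B l)"
  by (cases l) auto

lemma rd_winv: "rd w \<Longrightarrow> rd (winv A B w)"
proof (induction w)
  case (Cons l w)
  then show ?case
    by (cases w) (auto simp: winv_def reduced_append letter_ok_linv)
qed (simp add: winv_def)

lemma winv_l: "rd w \<Longrightarrow> mul (winv A B w) w = []"
proof (induction w)
  case (Cons l w)
  have "cl (linv A B l) (l # w) = w" using Cons.prems
    by (cases l) (auto simp: Let_def)
  then show ?case using Cons by (simp add: winv_def)
qed (simp add: winv_def)

lemma is_group: "group (free_product A B)"
  apply (rule groupI)
  apply (auto simp: free_product_def rd_mul mul_assoc)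
  using rd_winv winv_l by blast

lemma fp_simps: "carrier (free_product A B) = {w. rd w}"
  "monoid.mult (free_product A B) = mul" "one (free_product A B) = []"
  by (auto simp: free_product_def)

lemma fp_inv: "rd w \<Longrightarrow> inv\<^bsub>free_product A B\<^esub> w = winv A B w"
  using group.inv_equality[OF is_group] rd_winv winv_l by (auto simp: fp_simps)

lemma mul_app: "rd (u @ v) \<Longrightarrow> mul u v = u @ v"
proof (induction u)
  case (Cons l u)
  then show ?case by (auto simp: reduced_append cl_app intro!: cl_app)
qed simp

lemma A1: "x \<in> carrier A \<Longrightarrow> y \<in> carrier A \<Longrightarrow> (x \<otimes>\<^bsub>A\<^esub> y = \<one>\<^bsub>A\<^esub>) = (y = inv\<^bsub>A\<^esub> x)"
  by (metis A.inv_equality A.inv_inv A.r_inv)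
lemma A2: "x \<in> carrier A \<Longrightarrow> y \<in> carrier A \<Longrightarrow> (x \<otimes>\<^bsub>A\<^esub> y = \<one>\<^bsub>A\<^esub>) = (x = inv\<^bsub>A\<^esub> y)"
  by (metis A.inv_equality A.l_inv)
lemma B1: "x \<in> carrier B \<Longrightarrow> y \<in> carrier B \<Longrightarrow> (x \<otimes>\<^bsub>B\<^esub> y = \<one>\<^bsub>B\<^esub>) = (y = inv\<^bsub>B\<^esub> x)"
  by (metis B.inv_equality B.inv_inv B.r_inv)
lemma B2: "x \<in> carrier B \<Longrightarrow> y \<in> carrier B \<Longrightarrow> (x \<otimes>\<^bsub>B\<^esub> y = \<one>\<^bsub>B\<^esub>) = (x = inv\<^bsub>B\<^esub> y)"
  by (metis B.inv_equality B.l_inv)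

end


locale fp3 = fp +
  fixes a b
  assumes a: "a \<in> carrier A" "a \<noteq> \<one>\<^bsub>A\<^esub>"
    and b: "b \<in> carrier B" "b \<noteq> \<one>\<^bsub>B\<^esub>"
    and nt: "\<not> (inv\<^bsub>A\<^esub> a = a \<and> inv\<^bsub>B\<^esub> b = b)"
begin

abbreviation "ai \<equiv> inv\<^bsub>A\<^esub> a"
abbreviation "bi \<equiv> inv\<^bsub>B\<^esub> b"
abbreviation "g \<equiv> [Inl a, Inr b]"
abbreviation "gi \<equiv> [Inr bi, Inl ai]"

lemma ai: "ai \<in> carrier A" "ai \<noteq> \<one>\<^bsub>A\<^esub>" using a
  by auto
lemma bi: "bi \<in> carrier B" "bi \<noteq> \<one>\<^bsub>B\<^esub>" using b
  by auto

lemma LQ: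
  assumes x: "rd x" "x \<noteq> []" and nx: "\<not> (\<exists>u. x = Inr bi # Inl ai # u)"
  shows "mul g x \<noteq> [] \<and> isl (hd (mul g x)) \<and>
    (x \<noteq> [Inr bi] \<longrightarrow> isl (last (mul g x)) = isl (last x)) \<and>
    (x = [Inr bi] \<longrightarrow> mul g x = [Inl a]) \<and> (isl (hd x) \<longrightarrow> mul g x = g @ x)"
proof -
  obtain l x1 where x1: "x = l # x1" using x by (cases x) auto
  show ?thesis
  proof (cases l)
    case (Inl c)
    then show ?thesis using x1 by simp
  next
    case (Inr c)
    have c: "c \<in> carrier B" "c \<noteq> \<one>\<^bsub>B\<^esub>" using x x1 Inr by auto
    show ?thesis
    proof (cases "c = bi")
      case False
      then have "b \<otimes>\<^bsub>B\<^esub> c \<noteq> \<one>\<^bsub>B\<^esub>" using B1 b c by auto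
      then show ?thesis using x1 Inr False by (auto simp: Let_def)
    next
      case True
      then have bc: "b \<otimes>\<^bsub>B\<^esub> c = \<one>\<^bsub>B\<^esub>" using B1 b c by auto
      show ?thesis
      proof (cases x1)
        case Nil
        then show ?thesis using x1 Inr bc True b by (simp add: Let_def)
      next
        case (Cons l2 x2)
        then obtain d where d: "l2 = Inl d" using x x1 Inr by (cases l2) auto
        have dd: "d \<in> carrier A" "d \<noteq> ai" using x x1 Cons d nx Inr True by auto
        then have "a \<otimes>\<^bsub>A\<^esub> d \<noteq> \<one>\<^bsub>A\<^esub>" using A1 a by auto
        then show ?thesis using x1 Inr bc Cons d True by (auto simp: Let_def)
      qed
    qed
  qed
qed

lemma LQ':
  assumes x: "rd x" "x \<noteq> []" and nx: "\<not> (\<exists>u. x = Inl a # Inr b # u)"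
  shows "mul gi x \<noteq> [] \<and> \<not> isl (hd (mul gi x)) \<and>
    (x \<noteq> [Inl a] \<longrightarrow> isl (last (mul gi x)) = isl (last x)) \<and>
    (x = [Inl a] \<longrightarrow> mul gi x = [Inr bi]) \<and> (\<not> isl (hd x) \<longrightarrow> mul gi x = gi @ x)"
proof -
  obtain l x1 where x1: "x = l # x1" using x by (cases x) auto
  show ?thesis
  proof (cases l)
    case (Inr c)
    then show ?thesis using x1 by simp
  next
    case (Inl c)
    have c: "c \<in> carrier A" "c \<noteq> \<one>\<^bsub>A\<^esub>" using x x1 Inl by auto
    show ?thesis
    proof (cases "c = a")
      case False
      then have "ai \<otimes>\<^bsub>A\<^esub> c \<noteq> \<one>\<^bsub>A\<^esub>" using A1 ai c a by (auto simp: A.inv_inv)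
      then show ?thesis using x1 Inl False by (auto simp: Let_def)
    next
      case True
      then have bc: "ai \<otimes>\<^bsub>A\<^esub> c = \<one>\<^bsub>A\<^esub>" using a by simp
      show ?thesis
      proof (cases x1)
        case Nil
        then show ?thesis using x1 Inl bc True a by (simp add: Let_def)
      next
        case (Cons l2 x2)
        then obtain d where d: "l2 = Inr d" using x x1 Inl by (cases l2) auto
        have dd: "d \<in> carrier B" "d \<noteq> b" using x x1 Cons d nx Inl True by auto
        then have "bi \<otimes>\<^bsub>B\<^esub> d \<noteq> \<one>\<^bsub>B\<^esub>" using B1 bi b by (auto simp: B.inv_inv)
        then show ?thesis using x1 Inl bc Cons d True by (auto simp: Let_def)
      qed
    qed
  qed
qed

lemma LP:
  assumes x: "rd x" "x \<noteq> []" and nx: "\<not> (\<exists>u. x = u @ [Inr bi, Inl ai])"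
  shows "mul x g \<noteq> [] \<and> \<not> isl (last (mul x g)) \<and>
    (x \<noteq> [Inl ai] \<longrightarrow> isl (hd (mul x g)) = isl (hd x)) \<and>
    (x = [Inl ai] \<longrightarrow> mul x g = [Inr b]) \<and> (\<not> isl (last x) \<longrightarrow> mul x g = x @ g)"
proof -
  obtain l x0 where x0: "x = x0 @ [l]" using x by (cases x rule: rev_exhaust) auto
  have rx0: "rd x0" "letter_ok A B l" "x0 = [] \<or> isl (last x0) \<noteq> isl l"
    using x x0 by (auto simp: reduced_append)
  show ?thesis
  proof (cases l)
    case (Inr c)
    have "rd (x @ g)" using x x0 Inr a b by (auto simp: reduced_append)
    then have "mul x g = x @ g" by (rule mul_app)
    then show ?thesis using x0 Inr by (cases x0) auto
  next
    case (Inl c)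
    have c: "c \<in> carrier A" "c \<noteq> \<one>\<^bsub>A\<^esub>" using rx0 Inl by auto
    have e: "mul x g = mul x0 (cl l g)" using x0 by simp
    show ?thesis
    proof (cases "c = ai")
      case False
      then have ca: "c \<otimes>\<^bsub>A\<^esub> a \<noteq> \<one>\<^bsub>A\<^esub>" using A2 a c by auto
      have "rd (x0 @ [Inl (c \<otimes>\<^bsub>A\<^esub> a), Inr b])" using rx0 Inl ca c a b
        by (auto simp: reduced_append)
      then have "mul x g = x0 @ [Inl (c \<otimes>\<^bsub>A\<^esub> a), Inr b]" using e Inl ca
        by (simp add: Let_def mul_app)
      then show ?thesis using x0 Inl False by (cases x0) auto
    next
      case True
      then have ca: "c \<otimes>\<^bsub>A\<^esub> a = \<one>\<^bsub>A\<^esub>" using a by simp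
      have e2: "mul x g = mul x0 [Inr b]" using e Inl ca by (simp add: Let_def)
      show ?thesis
      proof (cases x0 rule: rev_exhaust)
        case Nil
        then show ?thesis using e2 x0 Inl True by simp
      next
        case (snoc x00 l2)
        then obtain d where d: "l2 = Inr d" using rx0 Inl by (cases l2) auto
        have dd: "d \<in> carrier B" "d \<noteq> bi" using x x0 snoc d nx Inl True
          by (auto simp: reduced_append)
        then have db: "d \<otimes>\<^bsub>B\<^esub> b \<noteq> \<one>\<^bsub>B\<^esub>" using B2 b by auto
        have "rd (x00 @ [Inr (d \<otimes>\<^bsub>B\<^esub> b)])" using rx0 snoc d db dd b
          by (auto simp: reduced_append)
        then have "mul x g = x00 @ [Inr (d \<otimes>\<^bsub>B\<^esub> b)]" using e2 snoc d db
          by (simp add: Let_def mul_app)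
        then show ?thesis using x0 Inl snoc d by (cases x00) auto
      qed
    qed
  qed
qed

end


context fp3
begin

abbreviation "pw k \<equiv> concat (replicate k g)"
abbreviation "nw k \<equiv> concat (replicate k gi)"

lemma pw_Suc': "pw (Suc k) = pw k @ g"
  by (simp flip: replicate_append_same)
lemma nw_Suc': "nw (Suc k) = nw k @ gi"
  by (simp flip: replicate_append_same)

lemma pw_shape: "pw k = [] \<or> (hd (pw k) = Inl a \<and> last (pw k) = Inr b)"
proof (cases k)
  case (Suc j)
  have "last (pw (Suc j)) = Inr b" by (simp only: pw_Suc') simp
  then show ?thesis using Suc by simp
qed simp
lemma nw_shape: "nw k = [] \<or> (hd (nw k) = Inr bi \<and> last (nw k) = Inl ai)"
proof (cases k)
  case (Suc j)
  have "last (nw (Suc j)) = Inl ai" by (simp only: nw_Suc') simp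
  then show ?thesis using Suc by simp
qed simp

lemma rg: "rd g" using a b by simp
lemma rgi: "rd gi" using ai bi by simp

lemma rd_pw: "rd (pw k)"
proof (induction k)
  case (Suc k) then show ?case using pw_shape[of k] a b by (auto simp: reduced_append)
qed simp
lemma rd_nw: "rd (nw k)"
proof (induction k)
  case (Suc k) then show ?case using nw_shape[of k] ai bi by (auto simp: reduced_append)
qed simp

lemma KPP:
  assumes x: "rd x" "x \<noteq> []"
    and p1: "\<not> (\<exists>u. x = Inr bi # Inl ai # u)" and p2: "\<not> (\<exists>u. x = Inl a # Inr b # u)"
    and p3: "\<not> (\<exists>u. x = u @ [Inr bi, Inl ai])"
    and eq: "mul x (pw (Suc n)) = mul (pw (Suc m)) x"
  shows False
proof -
  define P where "P = mul x g"
  define Q where "Q = mul g x"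
  note LP = LP[OF x p3, folded P_def]
  note LQ = LQ[OF x p1, folded Q_def]
  have rP: "rd P" unfolding P_def using rd_mul[OF x(1) rg] .
  have rQ: "rd Q" unfolding Q_def using rd_mul[OF rg x(1)] .
  have gp: "mul g (pw n) = g @ pw n" by (rule mul_app) (use rd_pw[of "Suc n"] in simp)
  have "mul x (pw (Suc n)) = mul x (mul g (pw n))"
    by (simp only: gp) simp
  also have "\<dots> = mul P (pw n)" unfolding P_def using x a b rd_pw[of n]
    by (simp add: mul_assoc del: concat.simps replicate.simps foldr.simps)
  also have "\<dots> = P @ pw n" using rP LP pw_shape[of n] rd_pw[of n]
    by (intro mul_app) (auto simp: reduced_append)
  finally have R: "mul x (pw (Suc n)) = P @ pw n" .
  have "mul (pw (Suc m)) x = mul (pw m) Q" unfolding Q_def pw_Suc' by simp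
  also have "\<dots> = pw m @ Q" using rQ LQ pw_shape[of m] rd_pw[of m]
    by (intro mul_app) (auto simp: reduced_append)
  finally have L: "mul (pw (Suc m)) x = pw m @ Q" .
  have E: "P @ pw n = pw m @ Q" using eq R L by simp
  have "hd (P @ pw n) = hd P" using LP by simp
  moreover have "isl (hd (pw m @ Q))" using pw_shape[of m] LQ by (auto simp: hd_append)
  ultimately have "isl (hd P)" using E by simp
  then have "x \<noteq> [Inl ai]" and h1: "isl (hd x)" using LP by auto
  have "last (pw m @ Q) = last Q" using LQ by simp
  moreover have "\<not> isl (last (P @ pw n))"
  proof (cases "pw n = []")
    case True then show ?thesis using LP by simp
  next
    case False then show ?thesis using pw_shape[of n] by (simp del: concat.simps replicate.simps)
  qed
  ultimately have "\<not> isl (last Q)" using E by simp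
  then have "x \<noteq> [Inr bi]" and h2: "\<not> isl (last x)" using LQ by auto
  have PE: "P = x @ g" using LP h2 by simp
  have QE: "Q = g @ x" using LQ h1 by simp
  obtain p q r where pqr: "x = p # q # r" using x h1 h2
    by (cases x; cases "tl x") auto
  have "pw m @ g = g @ pw m" by (metis pw_Suc' concat.simps(2) replicate_Suc)
  then have "pw m @ Q = g @ (pw m @ x)" using QE by (metis append_assoc)
  then have "take 2 (pw m @ Q) = g" by (simp add: numeral_2_eq_2)
  moreover have "take 2 (P @ pw n) = [p, q]" using PE pqr by (simp add: numeral_2_eq_2)
  ultimately show False using E pqr p2 by simp
qed

lemma KPM:
  assumes x: "rd x" "x \<noteq> []"
    and p1: "\<not> (\<exists>u. x = Inr bi # Inl ai # u)" and p2: "\<not> (\<exists>u. x = Inl a # Inr b # u)"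
    and p3: "\<not> (\<exists>u. x = u @ [Inr bi, Inl ai])"
    and eq: "mul x (pw (Suc n)) = mul (nw (Suc m)) x"
  shows False
proof -
  define P where "P = mul x g"
  define Q where "Q = mul gi x"
  note LP = LP[OF x p3, folded P_def]
  note LQ = LQ'[OF x p2, folded Q_def]
  have rP: "rd P" unfolding P_def using rd_mul[OF x(1) rg] .
  have rQ: "rd Q" unfolding Q_def using rd_mul[OF rgi x(1)] .
  have gp: "mul g (pw n) = g @ pw n" by (rule mul_app) (use rd_pw[of "Suc n"] in simp)
  have "mul x (pw (Suc n)) = mul x (mul g (pw n))"
    by (simp only: gp) simp
  also have "\<dots> = mul P (pw n)" unfolding P_def using x a b rd_pw[of n]
    by (simp add: mul_assoc del: concat.simps replicate.simps foldr.simps)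
  also have "\<dots> = P @ pw n" using rP LP pw_shape[of n] rd_pw[of n]
    by (intro mul_app) (auto simp: reduced_append)
  finally have R: "mul x (pw (Suc n)) = P @ pw n" .
  have "mul (nw (Suc m)) x = mul (nw m) Q" unfolding Q_def nw_Suc' by simp
  also have "\<dots> = nw m @ Q" using rQ LQ nw_shape[of m] rd_nw[of m]
    by (intro mul_app) (auto simp: reduced_append)
  finally have L: "mul (nw (Suc m)) x = nw m @ Q" .
  have E: "P @ pw n = nw m @ Q" using eq R L by simp
  have "hd (P @ pw n) = hd P" using LP by simp
  moreover have "\<not> isl (hd (nw m @ Q))" using nw_shape[of m] LQ by (auto simp: hd_append)
  ultimately have "\<not> isl (hd P)" using E by simp
  then have h1: "x = [Inl ai] \<or> \<not> isl (hd x)" using LP by auto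
  have "last (nw m @ Q) = last Q" using LQ by simp
  moreover have "\<not> isl (last (P @ pw n))"
  proof (cases "pw n = []")
    case True then show ?thesis using LP by simp
  next
    case False then show ?thesis using pw_shape[of n] by (simp del: concat.simps replicate.simps)
  qed
  ultimately have "\<not> isl (last Q)" using E by simp
  then have h2: "x = [Inl a] \<or> \<not> isl (last x)" using LQ by auto
  show False
  proof (cases "x = [Inl ai]")
    case True
    then have xa: "x = [Inl a]" using h2 by auto
    then have aa: "ai = a" using True by simp
    have "P = [Inr b]" using LP True by simp
    moreover have "Q = [Inr bi]" using LQ xa by simp
    ultimately have "Inr b # pw n = nw m @ [Inr bi]" using E by simp
    then have "Inr b = hd (nw m @ [Inr bi])" by (metis list.sel(1))
    then have "b = bi" using nw_shape[of m] by (cases "nw m = []") (auto simp: hd_append simp del: concat.simps replicate.simps)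
    then show False using aa nt by simp
  next
    case False
    then have hx: "\<not> isl (hd x)" using h1 by simp
    then have "x \<noteq> [Inl a]" by auto
    then have lx: "\<not> isl (last x)" using h2 by simp
    have PE: "P = x @ g" using LP lx by simp
    have QE: "Q = gi @ x" using LQ hx by simp
    have "nw m @ gi = gi @ nw m" by (metis nw_Suc' concat.simps(2) replicate_Suc)
    then have E2: "x @ g @ pw n = gi @ nw m @ x" using E PE QE by (metis append_assoc)
    obtain p r where pr: "x = p # r" using x by (cases x) auto
    have pp: "p = Inr bi" using E2 pr by simp
    show False
    proof (cases r)
      case Nil
      then have "Inl a # Inr b # pw n = Inl ai # nw m @ [Inr bi]" using E2 pr pp by simp
      then have aa: "a = ai" and "Inr b # pw n = nw m @ [Inr bi]" by auto
      then have "last (Inr b # pw n) = Inr bi" by simp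
      then have "b = bi" using pw_shape[of n] by (cases "pw n = []") (auto simp del: concat.simps replicate.simps)
      then show False using aa nt by simp
    next
      case (Cons q r')
      then have "q = Inl ai" using E2 pr by simp
      then show False using p1 pr pp Cons by simp
    qed
  qed
qed

end


sublocale fp \<subseteq> G: group "free_product A B" by (rule is_group)

context fp3
begin

abbreviation "F \<equiv> free_product A B"
definition "Hs = {g [^]\<^bsub>F\<^esub> (k::int) | k. True}"
definition "eqn x \<longleftrightarrow> (\<exists>(n::int) (m::int). n \<noteq> 0 \<and> m \<noteq> 0 \<and>
    x \<otimes>\<^bsub>F\<^esub> g [^]\<^bsub>F\<^esub> n = g [^]\<^bsub>F\<^esub> m \<otimes>\<^bsub>F\<^esub> x)"

lemma gC: "g \<in> carrier F" using rg by (simp add: fp_simps)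
lemma inv_g: "inv\<^bsub>F\<^esub> g = gi" using fp_inv[OF rg] by (simp add: winv_def)

lemma pow_nat: "g [^]\<^bsub>F\<^esub> (k::nat) = pw k"
proof (induction k)
  case (Suc k)
  have "rd (pw k @ g)" using rd_pw[of "Suc k"] by (simp only: pw_Suc')
  then show ?case using Suc by (simp add: fp_simps mul_app pw_Suc' del: concat.simps replicate.simps)
qed (simp add: fp_simps)

lemma ipow_nat: "(inv\<^bsub>F\<^esub> g) [^]\<^bsub>F\<^esub> (k::nat) = nw k"
proof (induction k)
  case (Suc k)
  have "rd (nw k @ gi)" using rd_nw[of "Suc k"] by (simp only: nw_Suc')
  then show ?case using Suc by (simp add: fp_simps mul_app nw_Suc' inv_g del: concat.simps replicate.simps)
qed (simp add: fp_simps)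

lemma Hs_sub: "Hs \<subseteq> carrier F" using G.int_pow_closed[OF gC] unfolding Hs_def by auto

lemma Hs_mult: "h \<in> Hs \<Longrightarrow> h' \<in> Hs \<Longrightarrow> h \<otimes>\<^bsub>F\<^esub> h' \<in> Hs"
  unfolding Hs_def using G.int_pow_mult[OF gC] by (auto, metis)

lemma Hs_comm: "h \<in> Hs \<Longrightarrow> h' \<in> Hs \<Longrightarrow> h \<otimes>\<^bsub>F\<^esub> h' = h' \<otimes>\<^bsub>F\<^esub> h"
  unfolding Hs_def using G.int_pow_mult[OF gC] by (auto, metis add.commute)

lemma eqn_left: assumes h: "h \<in> Hs" and y: "y \<in> carrier F" and e: "eqn (h \<otimes>\<^bsub>F\<^esub> y)"
  shows "eqn y"
proof -
  obtain n m :: int where nm: "n \<noteq> 0" "m \<noteq> 0"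
    "(h \<otimes>\<^bsub>F\<^esub> y) \<otimes>\<^bsub>F\<^esub> g [^]\<^bsub>F\<^esub> n = g [^]\<^bsub>F\<^esub> m \<otimes>\<^bsub>F\<^esub> (h \<otimes>\<^bsub>F\<^esub> y)"
    using e unfolding eqn_def by blast
  have hC: "h \<in> carrier F" using h Hs_sub by auto
  have gm: "g [^]\<^bsub>F\<^esub> m \<in> Hs" unfolding Hs_def by auto
  have "h \<otimes>\<^bsub>F\<^esub> (y \<otimes>\<^bsub>F\<^esub> g [^]\<^bsub>F\<^esub> n) = h \<otimes>\<^bsub>F\<^esub> (g [^]\<^bsub>F\<^esub> m \<otimes>\<^bsub>F\<^esub> y)"
    using nm(3) hC y gC Hs_comm[OF gm h]
    by (simp add: G.m_assoc[symmetric])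
  then have "y \<otimes>\<^bsub>F\<^esub> g [^]\<^bsub>F\<^esub> n = g [^]\<^bsub>F\<^esub> m \<otimes>\<^bsub>F\<^esub> y"
    using hC y gC by simp
  then show ?thesis using nm unfolding eqn_def by blast
qed

lemma eqn_right: assumes h: "h \<in> Hs" and y: "y \<in> carrier F" and e: "eqn (y \<otimes>\<^bsub>F\<^esub> h)"
  shows "eqn y"
proof -
  obtain n m :: int where nm: "n \<noteq> 0" "m \<noteq> 0"
    "(y \<otimes>\<^bsub>F\<^esub> h) \<otimes>\<^bsub>F\<^esub> g [^]\<^bsub>F\<^esub> n = g [^]\<^bsub>F\<^esub> m \<otimes>\<^bsub>F\<^esub> (y \<otimes>\<^bsub>F\<^esub> h)"
    using e unfolding eqn_def by blast
  have hC: "h \<in> carrier F" using h Hs_sub by auto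
  have gn: "g [^]\<^bsub>F\<^esub> n \<in> Hs" unfolding Hs_def by auto
  have "(y \<otimes>\<^bsub>F\<^esub> g [^]\<^bsub>F\<^esub> n) \<otimes>\<^bsub>F\<^esub> h = (g [^]\<^bsub>F\<^esub> m \<otimes>\<^bsub>F\<^esub> y) \<otimes>\<^bsub>F\<^esub> h"
    using nm(3) hC y gC Hs_comm[OF gn h]
    by (simp add: G.m_assoc)
  then have "y \<otimes>\<^bsub>F\<^esub> g [^]\<^bsub>F\<^esub> n = g [^]\<^bsub>F\<^esub> m \<otimes>\<^bsub>F\<^esub> y"
    using hC y gC by simp
  then show ?thesis using nm unfolding eqn_def by blast
qed

lemma pow_pos: "0 < (n::int) \<Longrightarrow> g [^]\<^bsub>F\<^esub> n = pw (Suc (nat n - 1))"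
proof -
  assume n: "0 < n"
  then have s: "Suc (nat n - 1) = nat n" by simp
  have "g [^]\<^bsub>F\<^esub> n = g [^]\<^bsub>F\<^esub> (nat n)" using n by (subst int_pow_def2) simp
  also have "\<dots> = pw (nat n)" by (rule pow_nat)
  finally show ?thesis by (simp only: s)
qed

lemma pow_neg: "(n::int) < 0 \<Longrightarrow> g [^]\<^bsub>F\<^esub> n = nw (Suc (nat (-n) - 1))"
proof -
  assume n: "n < 0"
  then have s: "Suc (nat (-n) - 1) = nat (-n)" by simp
  have "g [^]\<^bsub>F\<^esub> n = inv\<^bsub>F\<^esub> (g [^]\<^bsub>F\<^esub> (nat (-n)))" using n by (subst int_pow_def2) simp
  also have "\<dots> = (inv\<^bsub>F\<^esub> g) [^]\<^bsub>F\<^esub> (nat (-n))" by (rule G.nat_pow_inv[OF gC, symmetric])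
  also have "\<dots> = nw (nat (-n))" by (rule ipow_nat)
  finally show ?thesis by (simp only: s)
qed

lemma pos_case:
  assumes x: "rd x" "x \<noteq> []"
    and p1: "\<not> (\<exists>u. x = Inr bi # Inl ai # u)" and p2: "\<not> (\<exists>u. x = Inl a # Inr b # u)"
    and p3: "\<not> (\<exists>u. x = u @ [Inr bi, Inl ai])"
    and n: "0 < (n::int)" and m: "(m::int) \<noteq> 0"
    and e: "x \<otimes>\<^bsub>F\<^esub> g [^]\<^bsub>F\<^esub> n = g [^]\<^bsub>F\<^esub> m \<otimes>\<^bsub>F\<^esub> x"
  shows False
proof (cases "0 < m")
  case True
  have "mul x (pw (Suc (nat n - 1))) = mul (pw (Suc (nat m - 1))) x"
    using e by (simp only: pow_pos[OF n] pow_pos[OF True] fp_simps(2))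
  then show False using KPP[OF x p1 p2 p3] by blast
next
  case False
  then have "m < 0" using m by simp
  have "mul x (pw (Suc (nat n - 1))) = mul (nw (Suc (nat (-m) - 1))) x"
    using e by (simp only: pow_pos[OF n] pow_neg[OF \<open>m < 0\<close>] fp_simps(2))
  then show False using KPM[OF x p1 p2 p3] by blast
qed

lemma flip:
  assumes x: "x \<in> carrier F" and e: "x \<otimes>\<^bsub>F\<^esub> g [^]\<^bsub>F\<^esub> (n::int) = g [^]\<^bsub>F\<^esub> (m::int) \<otimes>\<^bsub>F\<^esub> x"
  shows "x \<otimes>\<^bsub>F\<^esub> g [^]\<^bsub>F\<^esub> (-n) = g [^]\<^bsub>F\<^esub> (-m) \<otimes>\<^bsub>F\<^esub> x"
proof -
  define h where "h = g [^]\<^bsub>F\<^esub> n"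
  define k where "k = g [^]\<^bsub>F\<^esub> m"
  have hC: "h \<in> carrier F" and kC: "k \<in> carrier F" unfolding h_def k_def using gC by auto
  have e': "x \<otimes>\<^bsub>F\<^esub> h = k \<otimes>\<^bsub>F\<^esub> x" using e unfolding h_def k_def .
  have "(inv\<^bsub>F\<^esub> k \<otimes>\<^bsub>F\<^esub> x) \<otimes>\<^bsub>F\<^esub> h = x"
  proof -
    have "(inv\<^bsub>F\<^esub> k \<otimes>\<^bsub>F\<^esub> x) \<otimes>\<^bsub>F\<^esub> h = inv\<^bsub>F\<^esub> k \<otimes>\<^bsub>F\<^esub> (k \<otimes>\<^bsub>F\<^esub> x)"
      using e' hC kC x by (simp add: G.m_assoc)
    also have "\<dots> = x" using kC x by (simp add: G.m_assoc[symmetric])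
    finally show ?thesis .
  qed
  then have "x \<otimes>\<^bsub>F\<^esub> inv\<^bsub>F\<^esub> h = inv\<^bsub>F\<^esub> k \<otimes>\<^bsub>F\<^esub> x"
    using G.inv_solve_right'[of "inv\<^bsub>F\<^esub> k \<otimes>\<^bsub>F\<^esub> x" x h] hC kC x by simp
  then show ?thesis unfolding h_def k_def using G.int_pow_neg[OF gC] by simp
qed

lemma g_Hs: "g \<in> Hs" unfolding Hs_def using G.int_pow_1[OF gC] by (metis (mono_tags, lifting) mem_Collect_eq)
lemma gi_Hs: "gi \<in> Hs" unfolding Hs_def using G.int_pow_neg[OF gC, of 1] G.int_pow_1[OF gC] inv_g
  by (metis (mono_tags, lifting) mem_Collect_eq)
lemma one_Hs: "[] \<in> Hs" unfolding Hs_def using int_pow_0[of F g]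
  by (metis (mono_tags, lifting) fp_simps(3) mem_Collect_eq)

lemma MAIN: "rd x \<Longrightarrow> eqn x \<Longrightarrow> x \<in> Hs"
proof (induction "length x" arbitrary: x rule: less_induct)
  case less
  have xC: "x \<in> carrier F" using less.prems by (simp add: fp_simps)
  show ?case
  proof (cases "\<exists>u. x = Inl a # Inr b # u")
    case True
    then obtain y where y: "x = g @ y" by auto
    have ry: "rd y" using less.prems y by (simp add: reduced_append)
    have xy: "x = g \<otimes>\<^bsub>F\<^esub> y" using mul_app[of _ y] mul_app[of y] less.prems y by (simp add: fp_simps del: foldr.simps)
    have yC: "y \<in> carrier F" using ry by (simp add: fp_simps)
    have "eqn y" by (rule eqn_left[OF g_Hs yC]) (use xy less.prems in simp)
    then have "y \<in> Hs" using less.hyps[of y] y ry by simp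
    then show ?thesis using xy Hs_mult[OF g_Hs] by simp
  next
    case n1: False
    show ?thesis
    proof (cases "\<exists>u. x = Inr bi # Inl ai # u")
      case True
      then obtain y where y: "x = gi @ y" by auto
      have ry: "rd y" using less.prems y by (simp add: reduced_append)
      have xy: "x = gi \<otimes>\<^bsub>F\<^esub> y" using mul_app[of _ y] mul_app[of y] less.prems y by (simp add: fp_simps del: foldr.simps)
      have yC: "y \<in> carrier F" using ry by (simp add: fp_simps)
      have "eqn y" by (rule eqn_left[OF gi_Hs yC]) (use xy less.prems in simp)
      then have "y \<in> Hs" using less.hyps[of y] y ry by simp
      then show ?thesis using xy Hs_mult[OF gi_Hs] by simp
    next
      case n2: False
      show ?thesis
      proof (cases "\<exists>u. x = u @ g")
        case True
        then obtain y where y: "x = y @ g" by auto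
        have ry: "rd y" using less.prems y by (simp add: reduced_append)
        have xy: "x = y \<otimes>\<^bsub>F\<^esub> g" using mul_app[of _ y] mul_app[of y] less.prems y by (simp add: fp_simps del: foldr.simps)
        have yC: "y \<in> carrier F" using ry by (simp add: fp_simps)
        have "eqn y" by (rule eqn_right[OF g_Hs yC]) (use xy less.prems in simp)
        then have "y \<in> Hs" using less.hyps[of y] y ry by simp
        then show ?thesis using xy Hs_mult[OF _ g_Hs] by simp
      next
        case n3: False
        show ?thesis
        proof (cases "\<exists>u. x = u @ gi")
          case True
          then obtain y where y: "x = y @ gi" by auto
          have ry: "rd y" using less.prems y by (simp add: reduced_append)
          have xy: "x = y \<otimes>\<^bsub>F\<^esub> gi" using mul_app[of _ y] mul_app[of y] less.prems y by (simp add: fp_simps del: foldr.simps)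
          have yC: "y \<in> carrier F" using ry by (simp add: fp_simps)
          have "eqn y" by (rule eqn_right[OF gi_Hs yC]) (use xy less.prems in simp)
          then have "y \<in> Hs" using less.hyps[of y] y ry by simp
          then show ?thesis using xy Hs_mult[OF _ gi_Hs] by simp
        next
          case n4: False
          show ?thesis
          proof (cases "x = []")
            case True then show ?thesis using one_Hs by simp
          next
            case ne: False
            obtain n m :: int where nm: "n \<noteq> 0" "m \<noteq> 0"
              "x \<otimes>\<^bsub>F\<^esub> g [^]\<^bsub>F\<^esub> n = g [^]\<^bsub>F\<^esub> m \<otimes>\<^bsub>F\<^esub> x"
              using less.prems unfolding eqn_def by blast
            show ?thesis
            proof (cases "0 < n")
              case True
              show ?thesis using pos_case[OF less.prems(1) ne n2 n1 n4 True nm(2) nm(3)] by simp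
            next
              case False
              then have "0 < - n" using nm by simp
              moreover have "- m \<noteq> 0" using nm by simp
              ultimately show ?thesis
                using pos_case[OF less.prems(1) ne n2 n1 n4 _ _ flip[OF xC nm(3)]] by simp
            qed
          qed
        qed
      qed
    qed
  qed
qed

lemma FIN: "\<forall>x \<in> carrier F - Hs. Hs \<inter> (\<lambda>h. x \<otimes>\<^bsub>F\<^esub> h \<otimes>\<^bsub>F\<^esub> inv\<^bsub>F\<^esub> x) ` Hs = {\<one>\<^bsub>F\<^esub>}"
proof
  fix x assume xx: "x \<in> carrier F - Hs"
  then have xC: "x \<in> carrier F" and xH: "x \<notin> Hs" by auto
  have oneH: "\<one>\<^bsub>F\<^esub> \<in> Hs" using one_Hs by (simp add: fp_simps)
  show "Hs \<inter> (\<lambda>h. x \<otimes>\<^bsub>F\<^esub> h \<otimes>\<^bsub>F\<^esub> inv\<^bsub>F\<^esub> x) ` Hs = {\<one>\<^bsub>F\<^esub>}"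
  proof
    show "{\<one>\<^bsub>F\<^esub>} \<subseteq> Hs \<inter> (\<lambda>h. x \<otimes>\<^bsub>F\<^esub> h \<otimes>\<^bsub>F\<^esub> inv\<^bsub>F\<^esub> x) ` Hs"
    proof -
      have "\<one>\<^bsub>F\<^esub> = x \<otimes>\<^bsub>F\<^esub> \<one>\<^bsub>F\<^esub> \<otimes>\<^bsub>F\<^esub> inv\<^bsub>F\<^esub> x" using xC by simp
      then show ?thesis using oneH by blast
    qed
  next
    show "Hs \<inter> (\<lambda>h. x \<otimes>\<^bsub>F\<^esub> h \<otimes>\<^bsub>F\<^esub> inv\<^bsub>F\<^esub> x) ` Hs \<subseteq> {\<one>\<^bsub>F\<^esub>}"
    proof
      fix y assume "y \<in> Hs \<inter> (\<lambda>h. x \<otimes>\<^bsub>F\<^esub> h \<otimes>\<^bsub>F\<^esub> inv\<^bsub>F\<^esub> x) ` Hs"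
      then obtain h where yH: "y \<in> Hs" and hH: "h \<in> Hs" and yh: "y = x \<otimes>\<^bsub>F\<^esub> h \<otimes>\<^bsub>F\<^esub> inv\<^bsub>F\<^esub> x"
        by auto
      obtain n :: int where hn: "h = g [^]\<^bsub>F\<^esub> n" using hH unfolding Hs_def by auto
      obtain m :: int where ym: "y = g [^]\<^bsub>F\<^esub> m" using yH unfolding Hs_def by auto
      have hC: "h \<in> carrier F" using hH Hs_sub by auto
      have yx: "y \<otimes>\<^bsub>F\<^esub> x = x \<otimes>\<^bsub>F\<^esub> h" using yh xC hC by (simp add: G.m_assoc)
      show "y \<in> {\<one>\<^bsub>F\<^esub>}"
      proof (rule ccontr)
        assume ny: "y \<notin> {\<one>\<^bsub>F\<^esub>}"
        then have m0: "m \<noteq> 0" using ym by auto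
        have n0: "n \<noteq> 0"
        proof
          assume "n = 0"
          then have "h = \<one>\<^bsub>F\<^esub>" using hn by simp
          then have "y = \<one>\<^bsub>F\<^esub>" using yh xC by simp
          then show False using ny by simp
        qed
        have "eqn x" unfolding eqn_def using n0 m0 yx hn ym by metis
        then have "x \<in> Hs" using MAIN xC by (simp add: fp_simps)
        then show False using xH by simp
      qed
    qed
  qed
qed

lemma gen_eq: "generate F {incl_left A a \<otimes>\<^bsub>F\<^esub> incl_right B b} = Hs"
proof -
  have "incl_left A a \<otimes>\<^bsub>F\<^esub> incl_right B b = g"
    using a b by (simp add: incl_left_def incl_right_def fp_simps)
  then show ?thesis using G.generate_pow[OF gC] unfolding Hs_def by simp
qed

end

lemma ord2: assumes "group A" "a \<in> carrier A" "a \<noteq> \<one>\<^bsub>A\<^esub>" "inv\<^bsub>A\<^esub> a = a"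
  shows "group.ord A a = 2"
proof -
  interpret A: group A by fact
  have "a [^]\<^bsub>A\<^esub> (2::nat) = \<one>\<^bsub>A\<^esub>"
    using assms by (metis A.nat_pow_Suc A.nat_pow_0 A.l_one A.r_inv numeral_2_eq_2 One_nat_def)
  then have d: "A.ord a dvd 2" using A.pow_eq_id assms by blast
  have "A.ord a \<noteq> 1" using A.ord_eq_1 assms by blast
  moreover have "A.ord a \<noteq> 0"
  proof
    assume "A.ord a = 0"
    with d show False by simp
  qed
  moreover have "A.ord a \<le> 2" using d by (simp add: dvd_imp_le)
  ultimately show ?thesis by linarith
qed

theorem lemma2p4:
  fixes A :: "('a,'c) monoid_scheme" and B :: "('b,'d) monoid_scheme"
    and a :: 'a and b :: 'b
  assumes "group A" and "group B"
    and "a \<in> carrier A" and "a \<noteq> \<one>\<^bsub>A\<^esub>"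
    and "b \<in> carrier B" and "b \<noteq> \<one>\<^bsub>B\<^esub>"
    and "group.ord A a \<noteq> 2 \<or> group.ord B b \<noteq> 2"
  shows "(\<forall>x \<in> carrier (free_product A B) -
              generate (free_product A B)
                {incl_left A a \<otimes>\<^bsub>free_product A B\<^esub> incl_right B b}.
           generate (free_product A B)
                {incl_left A a \<otimes>\<^bsub>free_product A B\<^esub> incl_right B b}
           \<inter> (\<lambda>h. x \<otimes>\<^bsub>free_product A B\<^esub> h \<otimes>\<^bsub>free_product A B\<^esub> inv\<^bsub>free_product A B\<^esub> x) `
               generate (free_product A B)
                {incl_left A a \<otimes>\<^bsub>free_product A B\<^esub> incl_right B b}
           = {\<one>\<^bsub>free_product A B\<^esub>})
       \<and> conjugate_separated (free_product A B)
           (generate (free_product A B)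
              {incl_left A a \<otimes>\<^bsub>free_product A B\<^esub> incl_right B b})"
proof -
  have nt: "\<not> (inv\<^bsub>A\<^esub> a = a \<and> inv\<^bsub>B\<^esub> b = b)"
    using ord2[of A a] ord2[of B b] assms by auto
  interpret fp3 A B a b
    by (intro fp3.intro fp.intro fp3_axioms.intro) (use assms nt in auto)
  show ?thesis
    unfolding gen_eq conjugate_separated_def using FIN by simp
qed


end
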